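(* Let $L$ be a finite lattice and $\varphi\in M_1(L)$. Then $\lambda(\varphi;a,b)=B_\varphi(\langle a,b\rangle^* )$ for every pair $\{a,b\}$ of elements of $L$.
   Context: $L$ is a finite lattice with join $\vee$ and meet $\wedge$. $M_1(L)$ is the set of nonnegative monotone real functions on $L$. A path from $a$ to $b$ is a sequence $H=(h_0,\dots,h_m)$ of distinct elements of $L$ with $h_0=a$, $h_m=b$ ($m\ge 0$); $\varphi(H)=\sum_{i=0}^m\varphi(h_i)-\sum_{i=1}^m\varphi(h_{i-1}\vee h_i)$, and $\lambda(\varphi;a,b)=\max\{\varphi(H):H\text{ a path from }a\text{ to }b\}$. For $A\subseteq L$, $\langle A\rangle^*=\{x:x\ge a\text{ for some }a\in A\}$; $\langle a,b\rangle^*=\langle\{a,b\}\rangle^*$, $\langle x\rangle^*=\langle\{x\}\rangle^*$. $\mathcal L$ is the set of nonempty up-sets of $L$ ordered by $U\preceq V$ iff $U\supseteq V$ (meet = union). $M_\infty(\mathcal L)$ is the set of nonnegative completely monotone functions on $(\mathcal L,\preceq)$ (all iterated differences $\nabla_U\Phi(W)=\Phi(W)-\Phi(W\wedge U)$ nonnegative). $B_\varphi(U)=\min\{\Phi(U):\Phi\in M_\infty(\mathcal L),\ \Phi(\langle x\rangle^* )=\varphi(x)\ \forall x\in L\}$. *)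

theory Defs
  imports Main "HOL.Real"
begin

definition M1 :: "('a::lattice \<Rightarrow> real) set" where
  "M1 = {\<phi>. mono \<phi> \<and> (\<forall>x. 0 \<le> \<phi> x)}"

definition is_path :: "'a \<Rightarrow> 'a \<Rightarrow> 'a list \<Rightarrow> bool" where
  "is_path a b H \<longleftrightarrow> H \<noteq> [] \<and> distinct H \<and> hd H = a \<and> last H = b"

definition path_val :: "('a::lattice \<Rightarrow> real) \<Rightarrow> 'a list \<Rightarrow> real" where
  "path_val \<phi> H = sum_list (map \<phi> H) - sum_list (map (\<lambda>(x, y). \<phi> (sup x y)) (zip H (tl H)))"

definition lam :: "('a::{finite,lattice} \<Rightarrow> real) \<Rightarrow> 'a \<Rightarrow> 'a \<Rightarrow> real" where
  "lam \<phi> a b = Max {path_val \<phi> H | H. is_path a b H}"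

definition upcl :: "'a::order set \<Rightarrow> 'a set" where
  "upcl A = {x. \<exists>a\<in>A. a \<le> x}"

text \<open>Nonempty up-sets of L (the carrier of the lattice \<L>, ordered by reverse inclusion, meet = union).\<close>
definition upsets :: "'a::order set set" where
  "upsets = {U. U \<noteq> {} \<and> (\<forall>x\<in>U. \<forall>y. x \<le> y \<longrightarrow> y \<in> U)}"

text \<open>Iterated differences: nabla (U1 # Us) \<Phi> W = nabla Us \<Phi> W - nabla Us \<Phi> (W \<union> U1),
  where W \<union> U1 is the meet of W and U1 in \<L>.\<close>
fun nabla :: "'a set list \<Rightarrow> ('a set \<Rightarrow> real) \<Rightarrow> 'a set \<Rightarrow> real" where
  "nabla [] \<Phi> W = \<Phi> W"
| "nabla (U # Us) \<Phi> W = nabla Us \<Phi> W - nabla Us \<Phi> (W \<union> U)"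

text \<open>Nonnegative completely monotone functions on \<L> (only values on upsets matter).\<close>
definition Minf :: "('a::order set \<Rightarrow> real) set" where
  "Minf = {\<Phi>. (\<forall>W\<in>upsets. 0 \<le> \<Phi> W) \<and>
              (\<forall>Us W. set Us \<subseteq> upsets \<longrightarrow> W \<in> upsets \<longrightarrow> 0 \<le> nabla Us \<Phi> W)}"

definition Bphi :: "('a::order \<Rightarrow> real) \<Rightarrow> 'a set \<Rightarrow> real" where
  "Bphi \<phi> U = (LEAST r. \<exists>\<Phi>\<in>Minf. (\<forall>x. \<Phi> (upcl {x}) = \<phi> x) \<and> r = \<Phi> U)"

end

theory Submission
  imports Defs
begin

lemma pv_single[simp]: "path_val \<phi> [x] = \<phi> x"
  by (simp add: path_val_def)

lemma pv_cons2: "path_val \<phi> (x # y # H) = \<phi> x + path_val \<phi> (y # H) - \<phi> (sup x y)"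
  by (simp add: path_val_def)

lemma pv_split: "path_val \<phi> (P @ c # Q) = path_val \<phi> (P @ [c]) + path_val \<phi> (c # Q) - \<phi> c"
proof (induction P)
  case Nil then show ?case by simp
next
  case (Cons p P)
  show ?case
  proof (cases P)
    case Nil then show ?thesis using Cons by (simp add: pv_cons2)
  next
    case (Cons q P')
    then show ?thesis using Cons.IH by (simp add: pv_cons2)
  qed
qed

lemma pv_bound:
  assumes "mono \<phi>"
  shows "path_val \<phi> (x # H) \<le> \<phi> x \<and> path_val \<phi> (x # H) \<le> \<phi> (last (x # H))"
proof (induction H arbitrary: x)
  case Nil then show ?case by simp
next
  case (Cons y H)
  have a: "\<phi> x \<le> \<phi> (sup x y)" "\<phi> y \<le> \<phi> (sup x y)" using assms by (auto intro: monoD)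
  have "path_val \<phi> (x # y # H) = \<phi> x + path_val \<phi> (y # H) - \<phi> (sup x y)" by (rule pv_cons2)
  then show ?case using Cons.IH[of y] a by auto
qed

lemma pv_bound_snoc:
  assumes "mono \<phi>"
  shows "path_val \<phi> (P @ [c]) \<le> \<phi> c \<and> path_val \<phi> (P @ [c]) \<le> \<phi> (hd (P @ [c]))"
proof (cases P)
  case Nil then show ?thesis by simp
next
  case (Cons x P')
  then show ?thesis using pv_bound[OF assms, of x "P' @ [c]"] by simp
qed

lemma finite_paths: "finite {path_val \<phi> H | H. is_path (a::'a::{finite,lattice}) b H}"
proof -
  have "finite {xs::'a list. set xs \<subseteq> UNIV \<and> distinct xs}" by (rule finite_subset_distinct) simp
  then have "finite (path_val \<phi> ` {xs::'a list. set xs \<subseteq> UNIV \<and> distinct xs})" by simp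
  moreover have "{path_val \<phi> H | H. is_path a b H} \<subseteq> path_val \<phi> ` {xs::'a list. set xs \<subseteq> UNIV \<and> distinct xs}"
    by (auto simp: is_path_def)
  ultimately show ?thesis by (meson finite_subset)
qed

lemma path_exists: "\<exists>H. is_path a b H"
proof (cases "a = b")
  case True then show ?thesis by (intro exI[of _ "[a]"]) (simp add: is_path_def)
next
  case False then show ?thesis by (intro exI[of _ "[a,b]"]) (simp add: is_path_def)
qed

lemma lam_ge: "is_path a b H \<Longrightarrow> path_val \<phi> H \<le> lam \<phi> a b"
  unfolding lam_def by (rule Max_ge[OF finite_paths]) auto

lemma lam_attained: "\<exists>H. is_path a b H \<and> lam \<phi> a b = path_val \<phi> H"
proof -
  have "lam \<phi> a b \<in> {path_val \<phi> H | H. is_path a b H}"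
    unfolding lam_def using path_exists[of a b] by (intro Max_in[OF finite_paths]) auto
  then show ?thesis by auto
qed

lemma path_self: "is_path b b H \<Longrightarrow> H = [b]"
proof -
  assume h: "is_path b b H"
  then obtain T where H: "H = b # T" by (cases H) (auto simp: is_path_def)
  show ?thesis
  proof (cases T)
    case Nil then show ?thesis using H by simp
  next
    case (Cons t T')
    have "last T = b" "b \<notin> set T" using h H Cons by (auto simp: is_path_def)
    moreover have "last T \<in> set T" using Cons by simp
    ultimately show ?thesis by simp
  qed
qed

lemma lam_self: "lam \<phi> b b = \<phi> b"
  using lam_attained[of b b \<phi>] path_self by fastforce

lemma lam_le_phi: "mono \<phi> \<Longrightarrow> lam \<phi> x b \<le> \<phi> x"
proof -
  assume m: "mono \<phi>"
  obtain H where H: "is_path x b H" "lam \<phi> x b = path_val \<phi> H" using lam_attained by blast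
  then obtain T where "H = x # T" by (cases H) (auto simp: is_path_def)
  then show ?thesis using H pv_bound[OF m, of x T] by simp
qed

lemma lam_mono: assumes m: "mono \<phi>" and xy: "x \<le> y" shows "lam \<phi> x b \<le> lam \<phi> y b"
proof -
  obtain H where H: "is_path x b H" "lam \<phi> x b = path_val \<phi> H" using lam_attained by blast
  show ?thesis
  proof (cases "y \<in> set H")
    case False
    obtain T where HT: "H = x # T" using H by (cases H) (auto simp: is_path_def)
    have p: "is_path y b (y # H)" using H False by (auto simp: is_path_def)
    have "path_val \<phi> (y # H) = \<phi> y + path_val \<phi> H - \<phi> (sup y x)" using HT by (simp add: pv_cons2)
    also have "sup y x = y" using xy by (simp add: sup_absorb1)
    finally have "path_val \<phi> (y # H) = path_val \<phi> H" by simp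
    then show ?thesis using lam_ge[OF p, of \<phi>] H by simp
  next
    case True
    then obtain P Q where PQ: "H = P @ y # Q" by (meson split_list)
    have p: "is_path y b (y # Q)" using H PQ by (auto simp: is_path_def)
    have "path_val \<phi> H = path_val \<phi> (P @ [y]) + path_val \<phi> (y # Q) - \<phi> y" using PQ pv_split by simp
    then have "path_val \<phi> H \<le> path_val \<phi> (y # Q)" using pv_bound_snoc[OF m, of P y] by simp
    then show ?thesis using lam_ge[OF p, of \<phi>] H by simp
  qed
qed

lemma lam_mono2: assumes m: "mono \<phi>" and xy: "x \<le> y"
  shows "\<phi> x - lam \<phi> x b \<le> \<phi> y - lam \<phi> y b"
proof -
  obtain H where H: "is_path y b H" "lam \<phi> y b = path_val \<phi> H" using lam_attained by blast
  obtain T where HT: "H = y # T" using H by (cases H) (auto simp: is_path_def)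
  show ?thesis
  proof (cases "x \<in> set H")
    case False
    have p: "is_path x b (x # H)" using H False by (auto simp: is_path_def)
    have "path_val \<phi> (x # H) = \<phi> x + path_val \<phi> H - \<phi> (sup x y)" using HT by (simp add: pv_cons2)
    also have "sup x y = y" using xy by (simp add: sup_absorb2)
    finally show ?thesis using lam_ge[OF p, of \<phi>] H by simp
  next
    case True
    then obtain P Q where PQ: "H = P @ x # Q" by (meson split_list)
    have p: "is_path x b (x # Q)" using H PQ by (auto simp: is_path_def)
    have "path_val \<phi> H = path_val \<phi> (P @ [x]) + path_val \<phi> (x # Q) - \<phi> x" using PQ pv_split by simp
    moreover have "hd (P @ [x]) = y" using PQ HT by (cases P) auto
    ultimately have "path_val \<phi> H \<le> path_val \<phi> (x # Q) - \<phi> x + \<phi> y"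
      using pv_bound_snoc[OF m, of P x] by simp
    then show ?thesis using lam_ge[OF p, of \<phi>] H by simp
  qed
qed

lemma lam_nonneg: assumes m: "mono \<phi>" and nn: "\<forall>x. 0 \<le> \<phi> x"
  shows "0 \<le> lam \<phi> (x::'a::{finite,lattice}) b"
proof -
  define z :: 'a where "z = Inf_fin UNIV"
  have zx: "z \<le> x" for x unfolding z_def by (rule Inf_fin.coboundedI) auto
  have "\<phi> z \<le> lam \<phi> z b"
  proof (cases "z = b")
    case True then show ?thesis by (simp add: lam_self)
  next
    case False
    then have p: "is_path z b [z, b]" by (simp add: is_path_def)
    have "path_val \<phi> [z, b] = \<phi> z" using zx[of b] by (simp add: pv_cons2 sup_absorb2)
    then show ?thesis using lam_ge[OF p, of \<phi>] by simp
  qed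
  then show ?thesis using lam_mono[OF m zx[of x], of b] nn by (meson order_trans)
qed

lemma upcl_insert: "upcl (insert x A) = upcl {x} \<union> upcl A"
  by (auto simp: upcl_def)

lemma upcl_single: "upcl {x} = {y. x \<le> y}"
  by (auto simp: upcl_def)

lemma upcl_upsets: "A \<noteq> {} \<Longrightarrow> upcl A \<in> upsets"
  by (auto simp: upcl_def upsets_def intro: order_trans)

lemma upsets_ne: "W \<in> upsets \<Longrightarrow> W \<noteq> {}"
  by (simp add: upsets_def)

lemma upsets_Int: "A \<in> upsets \<Longrightarrow> B \<in> upsets \<Longrightarrow> A \<inter> B \<noteq> {} \<Longrightarrow> A \<inter> B \<in> upsets"
  by (auto simp: upsets_def)

lemma upsets_Un: "A \<in> upsets \<Longrightarrow> B \<in> upsets \<Longrightarrow> A \<union> B \<in> upsets"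
  by (auto simp: upsets_def)

lemma Minf_nabla: "\<Phi> \<in> Minf \<Longrightarrow> set Us \<subseteq> upsets \<Longrightarrow> W \<in> upsets \<Longrightarrow> 0 \<le> nabla Us \<Phi> W"
  by (simp add: Minf_def)

lemma Minf_mono: "\<Phi> \<in> Minf \<Longrightarrow> V \<in> upsets \<Longrightarrow> W \<in> upsets \<Longrightarrow> W \<subseteq> V \<Longrightarrow> \<Phi> V \<le> \<Phi> W"
proof -
  assume a: "\<Phi> \<in> Minf" "V \<in> upsets" "W \<in> upsets" "W \<subseteq> V"
  then have "0 \<le> nabla [V] \<Phi> W" by (intro Minf_nabla) auto
  moreover have "W \<union> V = V" using a by auto
  ultimately show ?thesis by simp
qed

lemma Minf_super: "\<Phi> \<in> Minf \<Longrightarrow> A \<in> upsets \<Longrightarrow> B \<in> upsets \<Longrightarrow> A \<inter> B \<noteq> {} \<Longrightarrow>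
    \<Phi> A + \<Phi> B \<le> \<Phi> (A \<union> B) + \<Phi> (A \<inter> B)"
proof -
  assume a: "\<Phi> \<in> Minf" "A \<in> upsets" "B \<in> upsets" "A \<inter> B \<noteq> {}"
  then have "0 \<le> nabla [A, B] \<Phi> (A \<inter> B)" using upsets_Int by (intro Minf_nabla) auto
  moreover have "A \<inter> B \<union> B = B" "A \<inter> B \<union> A = A" "A \<inter> B \<union> A \<union> B = A \<union> B" by auto
  ultimately show ?thesis by simp
qed

lemma walk_lower:
  assumes Phi: "\<Phi> \<in> Minf" and ext: "\<forall>x. \<Phi> (upcl {x}) = \<phi> x"
  shows "path_val \<phi> (x # H) \<le> \<Phi> (upcl (set (x # H)))"
proof (induction H arbitrary: x)
  case Nil then show ?case using ext by simp
next
  case (Cons y H)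
  let ?A = "upcl {x}" and ?B = "upcl (set (y # H))"
  have A: "?A \<in> upsets" and B: "?B \<in> upsets" by (auto intro: upcl_upsets)
  have s: "upcl {sup x y} \<subseteq> ?A \<inter> ?B" by (auto simp: upcl_def intro: order_trans)
  have "sup x y \<in> ?A \<inter> ?B" by (auto simp: upcl_def)
  then have ne: "?A \<inter> ?B \<noteq> {}" by blast
  have "\<Phi> ?A + \<Phi> ?B \<le> \<Phi> (?A \<union> ?B) + \<Phi> (?A \<inter> ?B)" by (rule Minf_super[OF Phi A B ne])
  moreover have "\<Phi> (?A \<inter> ?B) \<le> \<Phi> (upcl {sup x y})"
    by (rule Minf_mono[OF Phi upsets_Int[OF A B ne] upcl_upsets s]) simp
  moreover have "?A \<union> ?B = upcl (set (x # y # H))" using upcl_insert[of x "set (y#H)"] by simp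
  ultimately show ?case using Cons.IH[of y] ext by (simp add: pv_cons2)
qed

lemma lower_bound:
  assumes Phi: "\<Phi> \<in> Minf" and ext: "\<forall>x. \<Phi> (upcl {x}) = \<phi> x"
  shows "lam \<phi> a b \<le> \<Phi> (upcl {a, b})"
proof -
  obtain H where H: "is_path a b H" "lam \<phi> a b = path_val \<phi> H" using lam_attained by blast
  obtain T where HT: "H = a # T" using H by (cases H) (auto simp: is_path_def)
  have "b \<in> set H" using H by (auto simp: is_path_def)
  then have sub: "upcl {a, b} \<subseteq> upcl (set H)" using HT by (auto simp: upcl_def)
  have "\<Phi> (upcl (set H)) \<le> \<Phi> (upcl {a, b})"
    by (rule Minf_mono[OF Phi upcl_upsets upcl_upsets sub]) (auto simp: HT)
  then show ?thesis using walk_lower[OF Phi ext, of a T] H HT by simp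
qed

definition gmin :: "('a::finite \<Rightarrow> real) \<Rightarrow> 'a set \<Rightarrow> real" where
  "gmin f W = (if W = {} then 0 else Min (f ` W))"

definition Mx :: "('a::finite \<Rightarrow> real) \<Rightarrow> 'a set list \<Rightarrow> real" where
  "Mx f Us = foldr (\<lambda>U m. max (gmin f U) m) Us 0"

lemma Mx_nonneg: "0 \<le> Mx f Us"
  by (induction Us) (auto simp: Mx_def)

lemma gmin_nonneg: "\<forall>x. 0 \<le> f x \<Longrightarrow> 0 \<le> gmin f W"
  by (auto simp: gmin_def)

lemma gmin_Un: "W \<noteq> {} \<Longrightarrow> U \<noteq> {} \<Longrightarrow> gmin f (W \<union> U) = min (gmin f W) (gmin f U)"
  by (simp add: gmin_def image_Un Min_Un)

lemma max_arith: "(0::real) \<le> M \<Longrightarrow> max 0 (w - M) - max 0 (min w u - M) = max 0 (w - max u M)"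
  unfolding max_def min_def by auto

lemma nabla_gmin:
  assumes nn: "\<forall>x. 0 \<le> f x"
  shows "W \<noteq> {} \<Longrightarrow> \<forall>U\<in>set Us. U \<noteq> {} \<Longrightarrow> nabla Us (gmin f) W = max 0 (gmin f W - Mx f Us)"
proof (induction Us arbitrary: W)
  case Nil then show ?case using gmin_nonneg[OF nn] by (simp add: Mx_def)
next
  case (Cons U Us)
  have e: "gmin f (W \<union> U) = min (gmin f W) (gmin f U)" using Cons.prems by (simp add: gmin_Un)
  have "nabla (U # Us) (gmin f) W = max 0 (gmin f W - Mx f Us) - max 0 (gmin f (W \<union> U) - Mx f Us)"
    using Cons by simp
  moreover have "Mx f (U # Us) = max (gmin f U) (Mx f Us)" by (simp add: Mx_def)
  ultimately show ?case using e max_arith[OF Mx_nonneg[of f Us]] by simp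
qed

lemma nabla_add: "nabla Us (\<lambda>W. F W + G W) W = nabla Us F W + nabla Us G W"
  by (induction Us arbitrary: W) auto

lemma gmin_upcl1: "mono f \<Longrightarrow> gmin f (upcl {x}) = f x"
proof -
  assume m: "mono f"
  have ne: "{y. x \<le> y} \<noteq> {}" by auto
  have "Min (f ` {y. x \<le> y}) = f x"
  proof (rule Min_eqI)
    show "finite (f ` {y. x \<le> y})" by simp
    show "\<And>z. z \<in> f ` {y. x \<le> y} \<Longrightarrow> f x \<le> z" using m by (auto dest: monoD)
    show "f x \<in> f ` {y. x \<le> y}" by simp
  qed
  then show ?thesis using ne unfolding gmin_def upcl_single by (simp only: if_False)
qed

lemma gmin_upcl2: "mono f \<Longrightarrow> gmin f (upcl {x, y}) = min (f x) (f y)"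
proof -
  assume m: "mono f"
  have "upcl {x, y} = upcl {x} \<union> upcl {y}" using upcl_insert[of x "{y}"] by simp
  moreover have "upcl {x} \<noteq> {}" "upcl {y} \<noteq> {}" by (auto simp: upcl_def)
  ultimately show ?thesis using gmin_Un[of "upcl {x}" "upcl {y}" f] gmin_upcl1[OF m] by simp
qed

lemma Phi_Minf:
  assumes "\<forall>x. 0 \<le> f x" "\<forall>x. 0 \<le> g x"
  shows "(\<lambda>W. gmin f W + gmin g W) \<in> Minf"
proof -
  have "0 \<le> nabla Us (\<lambda>W. gmin f W + gmin g W) W" if "set Us \<subseteq> upsets" "W \<in> upsets" for Us W
  proof -
    have ne: "W \<noteq> {}" "\<forall>U\<in>set Us. U \<noteq> {}" using that upsets_ne by auto
    show ?thesis unfolding nabla_add using nabla_gmin[OF assms(1) ne] nabla_gmin[OF assms(2) ne] by simp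
  qed
  moreover have "0 \<le> gmin f W + gmin g W" for W using gmin_nonneg[OF assms(1), of W] gmin_nonneg[OF assms(2), of W] by simp
  ultimately show ?thesis by (auto simp: Minf_def)
qed

theorem proposition3p12:
  fixes \<phi> :: "'a::{finite,lattice} \<Rightarrow> real"
  assumes "\<phi> \<in> M1"
  shows "\<forall>a b. lam \<phi> a b = Bphi \<phi> (upcl {a, b})"
proof (intro allI)
  fix a b
  have m: "mono \<phi>" and nn: "\<forall>x. 0 \<le> \<phi> x" using assms by (auto simp: M1_def)
  define f where "f x = lam \<phi> x b" for x
  define g where "g x = \<phi> x - lam \<phi> x b" for x
  have fm: "mono f" unfolding f_def using lam_mono[OF m] by (auto intro: monoI)
  have gm: "mono g" unfolding g_def using lam_mono2[OF m] by (auto intro: monoI)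
  have fn: "\<forall>x. 0 \<le> f x" unfolding f_def using lam_nonneg[OF m nn] by auto
  have gn: "\<forall>x. 0 \<le> g x" unfolding g_def using lam_le_phi[OF m] by auto
  define \<Phi> where "\<Phi> W = gmin f W + gmin g W" for W
  have PM: "\<Phi> \<in> Minf" unfolding \<Phi>_def[abs_def] by (rule Phi_Minf[OF fn gn])
  have ext: "\<forall>x. \<Phi> (upcl {x}) = \<phi> x"
    unfolding \<Phi>_def using gmin_upcl1[OF fm] gmin_upcl1[OF gm] by (simp add: f_def g_def)
  have "\<Phi> (upcl {a, b}) = min (f a) (f b) + min (g a) (g b)"
    unfolding \<Phi>_def using gmin_upcl2[OF fm] gmin_upcl2[OF gm] by simp
  also have "\<dots> \<le> f a" using gn by (simp add: g_def lam_self)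
  finally have up: "\<Phi> (upcl {a, b}) \<le> lam \<phi> a b" by (simp add: f_def)
  have eq: "\<Phi> (upcl {a, b}) = lam \<phi> a b" using up lower_bound[OF PM ext, of a b] by simp
  show "lam \<phi> a b = Bphi \<phi> (upcl {a, b})"
    unfolding Bphi_def
  proof (rule Least_equality[symmetric])
    show "\<exists>\<Phi>\<in>Minf. (\<forall>x. \<Phi> (upcl {x}) = \<phi> x) \<and> lam \<phi> a b = \<Phi> (upcl {a, b})"
      using PM ext eq by auto
  next
    fix y assume "\<exists>\<Phi>\<in>Minf. (\<forall>x. \<Phi> (upcl {x}) = \<phi> x) \<and> y = \<Phi> (upcl {a, b})"
    then show "lam \<phi> a b \<le> y" using lower_bound by blast
  qed
qed

end
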